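(* Let $H_1$ and $H_2$ be vertex-disjoint connected graphs with $u\in V(H_1)$, $w\in V(H_2)$, where $H_2$ has at least two vertices. Let $k\geqslant 1$ and let $G$ be the graph obtained from $H_1\cup H_2$ by adding the edge $uw$, a new vertex $v$ adjacent to $u$, and $k$ new vertices $v_1,\ldots,v_k$ each adjacent only to $v$. Let $W=N_G(v)\setminus\{u\}=\{v_1,\ldots,v_k\}$ and $$G[v\rightarrow w;2]=G-\{vz: z\in W\}+\{wz: z\in W\}.$$ If $\varepsilon_{H_2}(w)\geqslant\varepsilon_{H_1}(u)$, then $\xi^{ee}(G)<\xi^{ee}(G[v\rightarrow w;2])$.
   Context: All graphs are finite, simple and connected. For a vertex $x$ of a connected graph $G$, $\varepsilon_G(x)$ is the eccentricity of $x$ and $d_G(x)$ its degree; $N_G(v)$ is the neighbourhood of $v$. The total reciprocal edge-eccentricity of $G$ is $\xi^{ee}(G)=\sum_{uv\in E(G)}\left(\frac{1}{\varepsilon_G(u)}+\frac{1}{\varepsilon_G(v)}\right)=\sum_{x\in V(G)}\frac{d_G(x)}{\varepsilon_G(x)}$. *)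

theory Defs
  imports Complex_Main
begin

definition simple_graph :: "'a set \<Rightarrow> 'a set set \<Rightarrow> bool" where
  "simple_graph V E \<longleftrightarrow> finite V \<and>
     (\<forall>e\<in>E. \<exists>x y. x \<noteq> y \<and> x \<in> V \<and> y \<in> V \<and> e = {x, y})"

fun walk_le :: "'a set set \<Rightarrow> 'a \<Rightarrow> 'a \<Rightarrow> nat \<Rightarrow> bool" where
  "walk_le E x y 0 \<longleftrightarrow> x = y"
| "walk_le E x y (Suc n) \<longleftrightarrow> walk_le E x y n \<or> (\<exists>z. {x, z} \<in> E \<and> walk_le E z y n)"

definition connected_graph :: "'a set \<Rightarrow> 'a set set \<Rightarrow> bool" where
  "connected_graph V E \<longleftrightarrow> simple_graph V E \<and> V \<noteq> {} \<and>
     (\<forall>x\<in>V. \<forall>y\<in>V. \<exists>n. walk_le E x y n)"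

definition gdist :: "'a set set \<Rightarrow> 'a \<Rightarrow> 'a \<Rightarrow> nat" where
  "gdist E x y = (LEAST n. walk_le E x y n)"

definition ecc :: "'a set \<Rightarrow> 'a set set \<Rightarrow> 'a \<Rightarrow> nat" where
  "ecc V E x = Max (gdist E x ` V)"

definition neighbours :: "'a set \<Rightarrow> 'a set set \<Rightarrow> 'a \<Rightarrow> 'a set" where
  "neighbours V E x = {y \<in> V. {x, y} \<in> E}"

definition degree :: "'a set \<Rightarrow> 'a set set \<Rightarrow> 'a \<Rightarrow> nat" where
  "degree V E x = card (neighbours V E x)"

definition xi_ee :: "'a set \<Rightarrow> 'a set set \<Rightarrow> real" where
  "xi_ee V E = (\<Sum>x\<in>V. real (degree V E x) / real (ecc V E x))"

end

theory Submission
  imports Defs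
begin

lemma walk_mono: "walk_le E x y m \<Longrightarrow> m \<le> n \<Longrightarrow> walk_le E x y n"
  by (induction n) (auto simp: le_Suc_eq)

lemma walk_edge: "{x,y} \<in> E \<Longrightarrow> walk_le E x y 1"
  by (simp add: One_nat_def)

lemma walk_trans: "walk_le E x y m \<Longrightarrow> walk_le E y z n \<Longrightarrow> walk_le E x z (m+n)"
proof (induction m arbitrary: x)
  case 0 then show ?case by simp
next
  case (Suc m)
  from Suc.prems(1) have "walk_le E x y m \<or> (\<exists>a. {x,a} \<in> E \<and> walk_le E a y m)" by simp
  then show ?case
  proof
    assume "walk_le E x y m"
    then have "walk_le E x z (m+n)" using Suc by blast
    then show ?thesis by (rule walk_mono) simp
  next
    assume "\<exists>a. {x,a} \<in> E \<and> walk_le E a y m"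
    then obtain a where "{x,a} \<in> E" "walk_le E a y m" by blast
    with Suc show ?thesis by auto
  qed
qed

lemma walk_sym: "walk_le E x y n \<Longrightarrow> walk_le E y x n"
proof (induction n arbitrary: x)
  case 0 then show ?case by simp
next
  case (Suc n)
  from Suc.prems have "walk_le E x y n \<or> (\<exists>a. {x,a} \<in> E \<and> walk_le E a y n)" by simp
  then show ?case
  proof
    assume "walk_le E x y n"
    then show ?thesis using Suc by simp
  next
    assume "\<exists>a. {x,a} \<in> E \<and> walk_le E a y n"
    then obtain a where a: "{x,a} \<in> E" "walk_le E a y n" by blast
    then have "walk_le E y a n" using Suc by blast
    moreover have "walk_le E a x 1" using a(1) by (simp add: insert_commute)
    ultimately show ?thesis using walk_trans by fastforce
  qed
qed

lemma walk_edge_mono: "E \<subseteq> F \<Longrightarrow> walk_le E x y n \<Longrightarrow> walk_le F x y n"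
  by (induction n arbitrary: x) auto

lemma walk_hom:
  assumes h: "\<And>a b. {a,b} \<in> E \<Longrightarrow> f a = f b \<or> {f a, f b} \<in> F"
  shows "walk_le E x y n \<Longrightarrow> walk_le F (f x) (f y) n"
proof (induction n arbitrary: x)
  case 0 then show ?case by simp
next
  case (Suc n)
  from Suc.prems have "walk_le E x y n \<or> (\<exists>a. {x,a} \<in> E \<and> walk_le E a y n)" by simp
  then show ?case
  proof
    assume "walk_le E x y n"
    then show ?thesis using Suc by simp
  next
    assume "\<exists>a. {x,a} \<in> E \<and> walk_le E a y n"
    then obtain a where a: "{x,a} \<in> E" "walk_le E a y n" by blast
    then have 1: "walk_le F (f a) (f y) n" using Suc by blast
    from h[OF a(1)] show ?thesis
    proof
      assume "f x = f a" then show ?thesis using 1 by simp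
    next
      assume "{f x, f a} \<in> F" then show ?thesis using 1 by auto
    qed
  qed
qed

lemma walk_cut:
  assumes h: "\<And>a b. {a,b} \<in> E \<Longrightarrow> a \<in> A \<Longrightarrow> b \<in> A \<or> b = c"
    and c: "c \<notin> A" and y: "y \<notin> A"
  shows "walk_le E x y n \<Longrightarrow> x \<in> A \<or> x = c \<Longrightarrow> \<exists>m\<le>n. walk_le E x c m \<and> walk_le E c y (n-m)"
proof (induction n arbitrary: x)
  case 0 then show ?case using y by auto
next
  case (Suc n)
  show ?case
  proof (cases "x = c")
    case True then show ?thesis using Suc.prems by (intro exI[of _ 0]) auto
  next
    case False
    then have xA: "x \<in> A" using Suc.prems by auto
    from Suc.prems have "walk_le E x y n \<or> (\<exists>a. {x,a} \<in> E \<and> walk_le E a y n)" by simp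
    then show ?thesis
    proof
      assume "walk_le E x y n"
      then obtain m where "m \<le> n" "walk_le E x c m" "walk_le E c y (n-m)" using Suc xA by blast
      moreover then have "walk_le E c y (Suc n - m)" using walk_mono by fastforce
      ultimately show ?thesis by (intro exI[of _ m]) auto
    next
      assume "\<exists>a. {x,a} \<in> E \<and> walk_le E a y n"
      then obtain a where a: "{x,a} \<in> E" "walk_le E a y n" by blast
      then have "a \<in> A \<or> a = c" using h xA by blast
      then obtain m where "m \<le> n" "walk_le E a c m" "walk_le E c y (n-m)" using Suc a by blast
      moreover have "walk_le E x c (Suc m)" using a(1) \<open>walk_le E a c m\<close> by auto
      ultimately show ?thesis by (intro exI[of _ "Suc m"]) auto
    qed
  qed
qed

definition reach where "reach E x y \<longleftrightarrow> (\<exists>n. walk_le E x y n)"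

lemma reach_trans: assumes "reach E x y" "reach E y z" shows "reach E x z"
proof -
  obtain m n where "walk_le E x y m" "walk_le E y z n" using assms by (auto simp: reach_def)
  then have "walk_le E x z (m+n)" by (rule walk_trans)
  then show ?thesis by (auto simp: reach_def)
qed
lemma reach_sym: assumes "reach E x y" shows "reach E y x"
proof -
  obtain n where "walk_le E x y n" using assms by (auto simp: reach_def)
  then have "walk_le E y x n" by (rule walk_sym)
  then show ?thesis by (auto simp: reach_def)
qed
lemma reach_edge: "{x,y} \<in> E \<Longrightarrow> reach E x y"
  unfolding reach_def using walk_edge[of x y E] by blast
lemma reach_refl: "reach E x x"
  unfolding reach_def by (auto intro: exI[of _ 0])

lemma gdist_le: "walk_le E x y n \<Longrightarrow> gdist E x y \<le> n"
  unfolding gdist_def by (rule Least_le)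
lemma gdist_walk: "reach E x y \<Longrightarrow> walk_le E x y (gdist E x y)"
  unfolding gdist_def reach_def by (metis LeastI)
lemma gdist_pos: "reach E x y \<Longrightarrow> x \<noteq> y \<Longrightarrow> 1 \<le> gdist E x y"
  using gdist_walk[of E x y] by (cases "gdist E x y") auto
lemma gdist_edge: "{x,y} \<in> E \<Longrightarrow> gdist E x y \<le> 1"
  using gdist_le[OF walk_edge[of x y E]] by simp
lemma gdist_tri: assumes "reach E x y" "reach E y z" shows "gdist E x z \<le> gdist E x y + gdist E y z"
  using gdist_le[OF walk_trans[OF gdist_walk[OF assms(1)] gdist_walk[OF assms(2)]]] .
lemma gdist_hom:
  assumes "\<And>a b. {a,b} \<in> E \<Longrightarrow> f a = f b \<or> {f a, f b} \<in> F" "reach E x y"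
  shows "gdist F (f x) (f y) \<le> gdist E x y"
proof -
  have "walk_le F (f x) (f y) (gdist E x y)"
    by (rule walk_hom[where f=f and F=F and E=E]) (use assms gdist_walk in auto)
  then show ?thesis by (rule gdist_le)
qed
lemma gdist_mono:
  assumes "E \<subseteq> F" "reach E x y"
  shows "gdist F x y \<le> gdist E x y"
  using gdist_le walk_edge_mono[OF assms(1) gdist_walk[OF assms(2)]] by metis
lemma gdist_cut:
  assumes h: "\<And>a b. {a,b} \<in> E \<Longrightarrow> a \<in> A \<Longrightarrow> b \<in> A \<or> b = c"
    and c: "c \<notin> A" and y: "y \<notin> A" and x: "x \<in> A \<or> x = c" and r: "reach E x y"
  shows "gdist E x c + gdist E c y \<le> gdist E x y"
proof -
  have "\<exists>m\<le>gdist E x y. walk_le E x c m \<and> walk_le E c y (gdist E x y - m)"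
    by (rule walk_cut[where A=A]) (use h c y x gdist_walk[OF r] in auto)
  then obtain m where "m \<le> gdist E x y" "walk_le E x c m" "walk_le E c y (gdist E x y - m)"
    by blast
  then show ?thesis using gdist_le[of E x c m] gdist_le[of E c y] by fastforce
qed

lemma ecc_geq: "finite V \<Longrightarrow> y \<in> V \<Longrightarrow> gdist E x y \<le> ecc V E x"
  unfolding ecc_def by simp
lemma ecc_le: "finite V \<Longrightarrow> V \<noteq> {} \<Longrightarrow> (\<And>y. y \<in> V \<Longrightarrow> gdist E x y \<le> B) \<Longrightarrow> ecc V E x \<le> B"
  unfolding ecc_def by simp
lemma ecc_attain: "finite V \<Longrightarrow> V \<noteq> {} \<Longrightarrow> \<exists>y\<in>V. gdist E x y = ecc V E x"
  unfolding ecc_def by (metis (mono_tags, lifting) Max_in finite_imageI image_iff image_is_empty)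

lemma sg_edge: assumes "simple_graph V E" "{a,b} \<in> E" shows "a \<in> V \<and> b \<in> V \<and> a \<noteq> b"
proof -
  obtain x y where xy: "x \<noteq> y" "x \<in> V" "y \<in> V" "{a,b} = {x,y}"
    using assms unfolding simple_graph_def by blast
  then have "(a = x \<and> b = y) \<or> (a = y \<and> b = x)" by (simp add: doubleton_eq_iff)
  then show ?thesis using xy by auto
qed


lemma reach_mono: "E \<subseteq> F \<Longrightarrow> reach E x y \<Longrightarrow> reach F x y"
  unfolding reach_def using walk_edge_mono[of E F x y] by blast

lemma frac_key:
  fixes dv dv' dw dw' ev ev' ew ew' k :: real
  assumes "dv \<le> dv' + k" "dw + k \<le> dw'" "0 < ev'" "ev' \<le> ev" "0 < ew'" "ew' \<le> ew"
    "ew' < ev" "1 \<le> k" "0 \<le> dv'" "0 \<le> dw"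
  shows "dv/ev + dw/ew < dv'/ev' + dw'/ew'"
proof -
  have ev: "0 < ev" "0 < ew" using assms by auto
  have 1: "dv/ev \<le> (dv'+k)/ev" using assms ev by (simp add: divide_right_mono)
  have 2: "dv'/ev \<le> dv'/ev'" using assms by (simp add: frac_le)
  have 3: "dw/ew \<le> dw/ew'" using assms by (simp add: frac_le)
  have 4: "(dw+k)/ew' \<le> dw'/ew'" using assms by (simp add: divide_right_mono)
  have 5: "k/ev < k/ew'" using assms by (simp add: divide_strict_left_mono)
  have "(dv'+k)/ev = dv'/ev + k/ev" by (simp add: add_divide_distrib)
  moreover have "(dw+k)/ew' = dw/ew' + k/ew'" by (simp add: add_divide_distrib)
  ultimately show ?thesis using 1 2 3 4 5 by linarith
qed

theorem theorem3p5:
  fixes V1 V2 W :: "'a set" and E1 E2 :: "'a set set" and u w v :: 'a and k :: nat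
  assumes H1: "connected_graph V1 E1"
    and H2: "connected_graph V2 E2"
    and disj: "V1 \<inter> V2 = {}"
    and u: "u \<in> V1" and w: "w \<in> V2"
    and H2_two: "card V2 \<ge> 2"
    and v_new: "v \<notin> V1 \<union> V2"
    and W_new: "W \<inter> (V1 \<union> V2 \<union> {v}) = {}"
    and W_fin: "finite W" and W_card: "card W = k" and k: "k \<ge> 1"
    and ecc_ge: "ecc V2 E2 w \<ge> ecc V1 E1 u"
  shows "xi_ee (V1 \<union> V2 \<union> {v} \<union> W)
            (E1 \<union> E2 \<union> {{u, w}, {u, v}} \<union> {{v, z} | z. z \<in> W})
       < xi_ee (V1 \<union> V2 \<union> {v} \<union> W)
            (E1 \<union> E2 \<union> {{u, w}, {u, v}} \<union> {{w, z} | z. z \<in> W})"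
proof -
  define V where "V = V1 \<union> V2 \<union> {v} \<union> W"
  define C where "C = E1 \<union> E2 \<union> {{u, w}, {u, v}}"
  define E where "E = C \<union> {{v, z} | z. z \<in> W}"
  define E' where "E' = C \<union> {{w, z} | z. z \<in> W}"
  have sg1: "simple_graph V1 E1" and sg2: "simple_graph V2 E2"
    using H1 H2 unfolding connected_graph_def by auto
  have fin1: "finite V1" and fin2: "finite V2" using sg1 sg2 unfolding simple_graph_def by auto
  have r1: "\<And>x y. x \<in> V1 \<Longrightarrow> y \<in> V1 \<Longrightarrow> reach E1 x y"
    using H1 unfolding connected_graph_def reach_def by auto
  have r2: "\<And>x y. x \<in> V2 \<Longrightarrow> y \<in> V2 \<Longrightarrow> reach E2 x y"
    using H2 unfolding connected_graph_def reach_def by auto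
  have e1: "\<And>a b. {a,b} \<in> E1 \<Longrightarrow> a \<in> V1 \<and> b \<in> V1" using sg_edge[OF sg1] by blast
  have e2: "\<And>a b. {a,b} \<in> E2 \<Longrightarrow> a \<in> V2 \<and> b \<in> V2" using sg_edge[OF sg2] by blast
  have uw: "u \<noteq> w" using u w disj by auto
  have uv: "u \<noteq> v" using u v_new by auto
  have vw: "v \<noteq> w" using w v_new by auto
  have W1: "\<And>z. z \<in> W \<Longrightarrow> z \<notin> V1 \<and> z \<notin> V2 \<and> z \<noteq> v" using W_new by auto
  have vV: "v \<notin> V1" "v \<notin> V2" using v_new by auto
  have uV2: "u \<notin> V2" and wV1: "w \<notin> V1" using u w disj by auto
  have finV: "finite V" using fin1 fin2 W_fin by (simp add: V_def)
  have VV: "V \<noteq> {}" "u \<in> V" "v \<in> V" "w \<in> V" using u w by (auto simp: V_def)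
  have edgeE: "\<And>a b. {a,b} \<in> E \<longleftrightarrow> {a,b} \<in> E1 \<or> {a,b} \<in> E2 \<or> {a,b} = {u,w} \<or> {a,b} = {u,v}
       \<or> (\<exists>z\<in>W. {a,b} = {v,z})"
    by (auto simp: E_def C_def)
  have edgeE': "\<And>a b. {a,b} \<in> E' \<longleftrightarrow> {a,b} \<in> E1 \<or> {a,b} \<in> E2 \<or> {a,b} = {u,w} \<or> {a,b} = {u,v}
       \<or> (\<exists>z\<in>W. {a,b} = {w,z})"
    by (auto simp: E'_def C_def)
  have E1E: "E1 \<subseteq> E" "E2 \<subseteq> E" "E1 \<subseteq> E'" "E2 \<subseteq> E'" by (auto simp: E_def E'_def C_def)
  have edges: "{u,w} \<in> E" "{u,v} \<in> E" "{u,w} \<in> E'" "{u,v} \<in> E'"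
    "\<And>z. z \<in> W \<Longrightarrow> {v,z} \<in> E" "\<And>z. z \<in> W \<Longrightarrow> {w,z} \<in> E'"
    by (auto simp: E_def E'_def C_def)
  have edges2: "{w,u} \<in> E" "{v,u} \<in> E" "{w,u} \<in> E'" "{v,u} \<in> E'"
    "\<And>z. z \<in> W \<Longrightarrow> {z,v} \<in> E" "\<And>z. z \<in> W \<Longrightarrow> {z,w} \<in> E'"
    using edges by (auto simp: insert_commute)
  have uW: "u \<notin> W" and wW: "w \<notin> W" and vW: "v \<notin> W" using W_new u w by auto
  have d12: "\<And>x. x \<in> V1 \<Longrightarrow> x \<notin> V2" using disj by blast
  have EC: "(a \<in> V1 \<and> b' \<in> V1 \<and> {a,b'} \<in> E1) \<or> (a \<in> V2 \<and> b' \<in> V2 \<and> {a,b'} \<in> E2)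
      \<or> (a = u \<and> b' = w) \<or> (a = w \<and> b' = u) \<or> (a = u \<and> b' = v) \<or> (a = v \<and> b' = u)
      \<or> (a = v \<and> b' \<in> W) \<or> (a \<in> W \<and> b' = v)" if "{a,b'} \<in> E" for a b'
  proof -
    have "{a,b'} \<in> E1 \<or> {a,b'} \<in> E2 \<or> {a,b'} = {u,w} \<or> {a,b'} = {u,v} \<or> (\<exists>z\<in>W. {a,b'} = {v,z})"
      using that by (simp only: edgeE)
    then show ?thesis
    proof (elim disjE bexE)
      assume h: "{a,b'} \<in> E1" then show ?thesis using e1[OF h] by simp
    next
      assume h: "{a,b'} \<in> E2" then show ?thesis using e2[OF h] by simp
    next
      assume "{a,b'} = {u,w}" then show ?thesis by (auto simp add: doubleton_eq_iff)
    next
      assume "{a,b'} = {u,v}" then show ?thesis by (auto simp add: doubleton_eq_iff)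
    next
      fix z assume "z \<in> W" "{a,b'} = {v,z}" then show ?thesis by (auto simp add: doubleton_eq_iff)
    qed
  qed
  have EC': "(a \<in> V1 \<and> b' \<in> V1 \<and> {a,b'} \<in> E1) \<or> (a \<in> V2 \<and> b' \<in> V2 \<and> {a,b'} \<in> E2)
      \<or> (a = u \<and> b' = w) \<or> (a = w \<and> b' = u) \<or> (a = u \<and> b' = v) \<or> (a = v \<and> b' = u)
      \<or> (a = w \<and> b' \<in> W) \<or> (a \<in> W \<and> b' = w)" if "{a,b'} \<in> E'" for a b'
  proof -
    have "{a,b'} \<in> E1 \<or> {a,b'} \<in> E2 \<or> {a,b'} = {u,w} \<or> {a,b'} = {u,v} \<or> (\<exists>z\<in>W. {a,b'} = {w,z})"
      using that by (simp only: edgeE')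
    then show ?thesis
    proof (elim disjE bexE)
      assume h: "{a,b'} \<in> E1" then show ?thesis using e1[OF h] by simp
    next
      assume h: "{a,b'} \<in> E2" then show ?thesis using e2[OF h] by simp
    next
      assume "{a,b'} = {u,w}" then show ?thesis by (auto simp add: doubleton_eq_iff)
    next
      assume "{a,b'} = {u,v}" then show ?thesis by (auto simp add: doubleton_eq_iff)
    next
      fix z assume "z \<in> W" "{a,b'} = {w,z}" then show ?thesis by (auto simp add: doubleton_eq_iff)
    qed
  qed
  have rEu: "reach E x u" if "x \<in> V" for x
  proof -
    have "x \<in> V1 \<or> x \<in> V2 \<or> x = v \<or> x \<in> W" using that by (auto simp: V_def)
    then show ?thesis
    proof (elim disjE)
      assume "x \<in> V1" then show ?thesis using reach_mono[OF E1E(1) r1[OF _ u]] by blast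
    next
      assume x2: "x \<in> V2"
      have "reach E x w" using reach_mono[OF E1E(2) r2[OF x2 w]] .
      moreover have "reach E w u" using reach_edge[OF edges2(1)] .
      ultimately show ?thesis by (rule reach_trans)
    next
      assume "x = v" then show ?thesis using reach_edge[OF edges2(2)] by simp
    next
      assume xW: "x \<in> W"
      have "reach E x v" using reach_edge[OF edges2(5)[OF xW]] .
      moreover have "reach E v u" using reach_edge[OF edges2(2)] .
      ultimately show ?thesis by (rule reach_trans)
    qed
  qed
  have rE: "reach E x y" if "x \<in> V" "y \<in> V" for x y
    using reach_trans[OF rEu[OF that(1)] reach_sym[OF rEu[OF that(2)]]] .
  have rE'u: "reach E' x u" if "x \<in> V" for x
  proof -
    have "x \<in> V1 \<or> x \<in> V2 \<or> x = v \<or> x \<in> W" using that by (auto simp: V_def)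
    then show ?thesis
    proof (elim disjE)
      assume "x \<in> V1" then show ?thesis using reach_mono[OF E1E(3) r1[OF _ u]] by blast
    next
      assume x2: "x \<in> V2"
      have "reach E' x w" using reach_mono[OF E1E(4) r2[OF x2 w]] .
      moreover have "reach E' w u" using reach_edge[OF edges2(3)] .
      ultimately show ?thesis by (rule reach_trans)
    next
      assume "x = v" then show ?thesis using reach_edge[OF edges2(4)] by simp
    next
      assume xW: "x \<in> W"
      have "reach E' x w" using reach_edge[OF edges2(6)[OF xW]] .
      moreover have "reach E' w u" using reach_edge[OF edges2(3)] .
      ultimately show ?thesis by (rule reach_trans)
    qed
  qed
  have rE': "reach E' x y" if "x \<in> V" "y \<in> V" for x y
    using reach_trans[OF rE'u[OF that(1)] reach_sym[OF rE'u[OF that(2)]]] .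
  define b where "b = ecc V2 E2 w"
  obtain t where t: "t \<in> V2" "t \<noteq> w"
  proof -
    have "\<not> V2 \<subseteq> {w}"
    proof
      assume "V2 \<subseteq> {w}"
      then have "card V2 \<le> card {w}" by (rule card_mono[rotated]) simp
      then show False using H2_two by simp
    qed
    then show ?thesis using that by blast
  qed
  have b1: "1 \<le> b"
    using gdist_pos[OF r2[OF w t(1)]] t ecc_geq[OF fin2 t(1), of E2 w] by (simp add: b_def)
  obtain ys where ys: "ys \<in> V2" "gdist E2 w ys = b"
    using ecc_attain[OF fin2, of E2 w] w by (auto simp: b_def)
  have ab: "gdist E1 u y \<le> b" if "y \<in> V1" for y
    using ecc_geq[OF fin1 that, of E1 u] ecc_ge by (simp add: b_def)
  define rho where "rho t = (if t \<in> V2 then t else w)" for t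
  have homrho: "rho a = rho b' \<or> {rho a, rho b'} \<in> E2" if "{a,b'} \<in> E" for a b'
    using EC[OF that] d12 uV2 vV W1 w by (auto simp: rho_def)
  have LB1: "b \<le> gdist E w ys"
  proof -
    have ysV: "ys \<in> V" using ys by (simp add: V_def)
    show ?thesis using gdist_hom[of E rho E2, OF homrho, of w ys] rE[OF VV(4) ysV] ys w by (simp add: rho_def)
  qed
  have cutU: "b' \<in> {v} \<union> W \<or> b' = u" if "{a,b'} \<in> E" "a \<in> {v} \<union> W" for a b'
    using EC[OF that(1)] that(2) W1 vV uv vw uW wW vW by auto
  have cutW1: "b' \<in> V1 \<union> {v} \<union> W \<or> b' = w" if "{a,b'} \<in> E" "a \<in> V1 \<union> {v} \<union> W" for a b'
    using EC[OF that(1)] that(2) W1 vV d12 u uW wW vW wV1 vw by auto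
  have cutW2: "b' \<in> V2 - {w} \<or> b' = w" if "{a,b'} \<in> E" "a \<in> V2 - {w}" for a b'
    using EC[OF that(1)] that(2) W1 vV d12 uV2 uW wW vW by auto
  have duw: "1 \<le> gdist E u w" using gdist_pos rE VV uw by metis
  have dzw: "2 \<le> gdist E z w" if "z \<in> {v} \<union> W" for z
  proof -
    have "gdist E z u + gdist E u w \<le> gdist E z w"
    proof (rule gdist_cut[OF cutU])
      have zV: "z \<in> V" using that by (auto simp: V_def)
      show "reach E z w" using rE[OF zV VV(4)] .
    qed (use that uv uW vw wW in auto)
    moreover have "1 \<le> gdist E z u"
    proof (rule gdist_pos)
      have zV: "z \<in> V" using that by (auto simp: V_def)
      show "reach E z u" using rE[OF zV VV(2)] .
    qed (use that uv uW in auto)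
    ultimately show ?thesis using duw by linarith
  qed
  have ezb: "b + 2 \<le> ecc V E z" if "z \<in> {v} \<union> W" for z
  proof -
    have "gdist E z w + gdist E w ys \<le> gdist E z ys"
    proof (rule gdist_cut[OF cutW1])
      have zV: "z \<in> V" and ysV: "ys \<in> V" using that ys by (auto simp: V_def)
      show "reach E z ys" using rE[OF zV ysV] .
    qed (use that vw wW wV1 ys d12 vV W1 in auto)
    moreover have "gdist E z ys \<le> ecc V E z" using ecc_geq[OF finV, of ys E z] ys by (simp add: V_def)
    ultimately show ?thesis using dzw[OF that] LB1 by linarith
  qed
  define phi where "phi t = (if t \<in> W then v else t)" for t
  have homphi: "phi a = phi b' \<or> {phi a, phi b'} \<in> E'" if "{a,b'} \<in> E" for a b'
    using EC[OF that] W1 E1E edges edges2 uW wW vW by (auto simp: phi_def)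
  have UB1: "gdist E' x y \<le> gdist E x y" if "x \<in> V" "y \<in> V" "x \<notin> W" "y \<notin> W" for x y
    using gdist_hom[of E phi E', OF homphi, of x y] rE[OF that(1,2)] that by (auto simp: phi_def)
  have ew': "ecc V E' w \<le> b + 1"
  proof (rule ecc_le[OF finV VV(1)])
    fix y assume y: "y \<in> V"
    then have "y \<in> W \<or> y \<in> V2 \<or> y \<in> V1 \<or> y = v" by (auto simp: V_def)
    then show "gdist E' w y \<le> b + 1"
    proof (elim disjE)
      assume "y \<in> W" then show ?thesis using gdist_edge edges by fastforce
    next
      assume y2: "y \<in> V2"
      have "gdist E' w y \<le> gdist E2 w y" using gdist_mono E1E r2 y2 w by metis
      also have "\<dots> \<le> b" using ecc_geq[OF fin2 y2] by (simp add: b_def)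
      finally show ?thesis by simp
    next
      assume y1: "y \<in> V1"
      have "gdist E' w y \<le> gdist E' w u + gdist E' u y" using gdist_tri rE' VV y by metis
      moreover have "gdist E' w u \<le> 1" using gdist_edge edges2 by metis
      moreover have "gdist E' u y \<le> gdist E1 u y" using gdist_mono E1E r1 y1 u by metis
      ultimately show ?thesis using ab[OF y1] by linarith
    next
      assume "y = v"
      have "gdist E' w v \<le> gdist E' w u + gdist E' u v" using gdist_tri rE' VV by metis
      moreover have "gdist E' w u \<le> 1" using gdist_edge edges2 by metis
      moreover have "gdist E' u v \<le> 1" using gdist_edge edges by metis
      ultimately show ?thesis using b1 \<open>y = v\<close> by simp
    qed
  qed
  have eccA: "ecc V E' x \<le> ecc V E x" if x: "x \<in> V" for x
  proof (rule ecc_le[OF finV VV(1)])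
    fix y assume y: "y \<in> V"
    have tri: "gdist E' x y \<le> gdist E' x w + gdist E' w y" using gdist_tri rE' VV x y by metis
    have wy: "gdist E' w y \<le> b + 1" using ecc_geq[OF finV y] ew' by (meson order_trans)
    show "gdist E' x y \<le> ecc V E x"
    proof (cases "x \<in> W")
      case True
      have "gdist E' x w \<le> 1" using gdist_edge edges2 True by metis
      then show ?thesis using tri wy ezb[of x] True by fastforce
    next
      case xW: False
      show ?thesis
      proof (cases "y \<in> W")
        case False
        then show ?thesis using UB1[OF x y xW False] ecc_geq[OF finV y, of E x] by linarith
      next
        case yW: True
        have wy1: "gdist E' w y \<le> 1" using gdist_edge edges yW by metis
        have xw: "gdist E' x w \<le> gdist E x w" using UB1[OF x VV(4) xW] W1 w by blast
        show ?thesis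
        proof (cases "x \<in> V2")
          case True
          have "gdist E x w + gdist E w y \<le> gdist E x y"
          proof (rule gdist_cut[OF cutW2])
            show "reach E x y" using rE[OF x y] .
          qed (use True yW W1 in auto)
          moreover have "1 \<le> gdist E w y" using gdist_pos rE VV y yW W1 w by metis
          moreover have "gdist E x y \<le> ecc V E x" using ecc_geq finV y by metis
          ultimately show ?thesis using tri wy1 xw by linarith
        next
          case False
          then have xA: "x \<in> V1 \<union> {v} \<union> W" using x by (auto simp: V_def)
          have tV: "t \<in> V" using t by (auto simp: V_def)
          have "gdist E x w + gdist E w t \<le> gdist E x t"
          proof (rule gdist_cut[OF cutW1])
            show "reach E x t" using rE[OF x tV] .
          qed (use xA t d12 vV W1 vw wW wV1 in auto)
          moreover have "1 \<le> gdist E w t" using gdist_pos rE VV tV t by metis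
          moreover have "gdist E x t \<le> ecc V E x" using ecc_geq finV tV by metis
          ultimately show ?thesis using tri wy1 xw by linarith
        qed
      qed
    qed
  qed
  have eccB: "1 \<le> ecc V E' x" if x: "x \<in> V" for x
  proof -
    define y where "y = (if x = u then v else u)"
    have y: "y \<in> V" "y \<noteq> x" using VV uv by (auto simp: y_def)
    have "1 \<le> gdist E' x y" using gdist_pos rE' x y by metis
    also have "\<dots> \<le> ecc V E' x" using ecc_geq finV y by metis
    finally show ?thesis .
  qed
  have eccC: "ecc V E' w < ecc V E v" using ew' ezb[of v] by simp
  have finN: "finite (neighbours V F x)" for F x using finV by (simp add: neighbours_def)
  have degx: "degree V E x \<le> degree V E' x" if x: "x \<in> V" "x \<noteq> v" "x \<noteq> w" for x
  proof (cases "x \<in> W")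
    case True
    have "neighbours V E x \<subseteq> {v}"
    proof
      fix y assume "y \<in> neighbours V E x"
      then have "{x,y} \<in> E" by (simp add: neighbours_def)
      then show "y \<in> {v}" using EC[of x y] W1[OF True] True uW wW vW by auto
    qed
    then have "card (neighbours V E x) \<le> card {v}" by (intro card_mono) auto
    then have "card (neighbours V E x) \<le> 1" by simp
    moreover have "w \<in> neighbours V E' x" using edges2 True VV by (simp add: neighbours_def)
    then have "1 \<le> card (neighbours V E' x)" using finN[of E' x] by (simp add: Suc_le_eq card_gt_0_iff) blast
    ultimately show ?thesis by (simp add: degree_def)
  next
    case False
    have "neighbours V E x \<subseteq> neighbours V E' x"
    proof
      fix y assume "y \<in> neighbours V E x"
      then have "{x,y} \<in> E" "y \<in> V" by (auto simp: neighbours_def)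
      then have "{x,y} \<in> C" using False x by (auto simp: E_def)
      then show "y \<in> neighbours V E' x" using \<open>y \<in> V\<close> by (auto simp: neighbours_def E'_def)
    qed
    then show ?thesis by (simp add: degree_def card_mono finN)
  qed
  have degw: "degree V E w + k \<le> degree V E' w"
  proof -
    have sub: "neighbours V E w \<union> W \<subseteq> neighbours V E' w"
    proof
      fix y assume "y \<in> neighbours V E w \<union> W"
      then show "y \<in> neighbours V E' w"
      proof
        assume "y \<in> neighbours V E w"
        then have "{w,y} \<in> E" "y \<in> V" by (auto simp: neighbours_def)
        then have "{w,y} \<in> C" using vw wW by (auto simp: E_def doubleton_eq_iff)
        then show ?thesis using \<open>y \<in> V\<close> by (auto simp: neighbours_def E'_def)
      next
        assume "y \<in> W" then show ?thesis using edges by (auto simp: neighbours_def V_def)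
      qed
    qed
    have dis: "neighbours V E w \<inter> W = {}"
    proof (rule ccontr)
      assume "neighbours V E w \<inter> W \<noteq> {}"
      then obtain y where y: "y \<in> W" "{w,y} \<in> E" by (auto simp: neighbours_def)
      from EC[OF y(2)] show False using W1[OF y(1)] wV1 vw wW uW u uw by auto
    qed
    have "card (neighbours V E w \<union> W) = degree V E w + k"
      using card_Un_disjoint[OF finN W_fin dis] W_card by (simp add: degree_def)
    then show ?thesis using card_mono[OF finN sub] by (simp add: degree_def)
  qed
  have degv: "degree V E v \<le> degree V E' v + k"
  proof -
    have sub: "neighbours V E v \<subseteq> neighbours V E' v \<union> W"
    proof
      fix y assume "y \<in> neighbours V E v"
      then have "{v,y} \<in> E" "y \<in> V" by (auto simp: neighbours_def)
      show "y \<in> neighbours V E' v \<union> W"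
      proof (cases "y \<in> W")
        case False
        then have "{v,y} \<in> C" using \<open>{v,y} \<in> E\<close> by (auto simp: E_def doubleton_eq_iff)
        then show ?thesis using \<open>y \<in> V\<close> by (auto simp: neighbours_def E'_def)
      qed simp
    qed
    have "card (neighbours V E v) \<le> card (neighbours V E' v \<union> W)"
      using sub finN W_fin by (simp add: card_mono)
    also have "\<dots> \<le> card (neighbours V E' v) + card W" by (rule card_Un_le)
    finally show ?thesis using W_card by (simp add: degree_def)
  qed
  define f where "f x = real (degree V E x) / real (ecc V E x)" for x
  define f' where "f' x = real (degree V E' x) / real (ecc V E' x)" for x
  have rest: "sum f (V - {v} - {w}) \<le> sum f' (V - {v} - {w})"
  proof (rule sum_mono)
    fix x assume x: "x \<in> V - {v} - {w}"
    show "f x \<le> f' x" unfolding f_def f'_def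
      apply (rule frac_le)
      using degx[of x] x eccA[of x] eccB[of x] by auto
  qed
  have vw_part: "f v + f w < f' v + f' w" unfolding f_def f'_def
    apply (rule frac_key[where k = "real k"])
    using degv degw eccA[of v] eccA[of w] eccB[of v] eccB[of w] eccC k VV by auto
  have wV: "w \<in> V - {v}" using VV vw by auto
  have "sum f V = f v + (f w + sum f (V - {v} - {w}))"
    using sum.remove[OF finV VV(3), of f] sum.remove[of "V - {v}" w f] finV wV by simp
  moreover have "sum f' V = f' v + (f' w + sum f' (V - {v} - {w}))"
    using sum.remove[OF finV VV(3), of f'] sum.remove[of "V - {v}" w f'] finV wV by simp
  ultimately have "sum f V < sum f' V" using rest vw_part by linarith
  then have "xi_ee V E < xi_ee V E'" by (simp add: xi_ee_def f_def f'_def)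
  then show ?thesis unfolding V_def E_def E'_def C_def .
qed

end
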